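(* Let $V_{ij}(s)$, $b_i(s)$, for $i=1,\dots,M$ and $j=1,\dots,N_2$, be real-analytic functions in a neighborhood $W$ of $s_0\in\mathbb{R}^{N_1}$. Denote by $\mathcal{G}$ the collection of real-analytic functions on $W\times\mathbb{R}^{N_2}$, affine in $t=(t^1,\dots,t^{N_2})$, given by $L_i(s,t):=\sum_jV_{ij}(s)t^j-b_i(s)$ for $i=1,\dots,M$. Assume that all functions in $\mathcal{G}$ vanish at $(s_0,t_0)$ for some $t_0\in\mathbb{R}^{N_2}$, and let $A:=\{(s,t)\in W\times\mathbb{R}^{N_2}: f(s,t)=0\ \forall f\in\mathcal{G}\}$. If there exists an integer $\kappa\ge0$ such that for all $s_1\in W$, $\dim\{t:(s_1,t)\in A\}=\kappa$, then $(s_0,t_0)$ is an ordinary zero of $\mathcal{G}$.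
   Context: A point $y_0\in\mathbb{R}^N$ is an ordinary zero of a family $\mathcal{G}$ of real-analytic functions near $y_0$ vanishing at $y_0$ if there exist $f_1,\dots,f_\kappa\in\mathcal{G}$ whose Jacobian matrix $(\partial f_i/\partial y^j(y_0))$ has rank $\kappa$ and such that the germ at $y_0$ of the common zero set $\{y: f(y)=0\ \forall f\in\mathcal{G}\}$ coincides with the germ at $y_0$ of $\{y:f_1(y)=\dots=f_\kappa(y)=0\}$. The dimension of the (affine) solution set $\{t:(s_1,t)\in A\}$ is its dimension as an affine subspace. *)

theory Defs
  imports "HOL-Analysis.Analysis"
begin

definition multi_indices :: "('a::euclidean_space \<Rightarrow> nat) set" where
  "multi_indices = {\<alpha>. \<forall>b. b \<notin> Basis \<longrightarrow> \<alpha> b = 0}"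

definition real_analytic_at :: "('a::euclidean_space \<Rightarrow> real) \<Rightarrow> 'a \<Rightarrow> bool" where
  "real_analytic_at f x \<longleftrightarrow>
     (\<exists>r>0. \<exists>c :: ('a \<Rightarrow> nat) \<Rightarrow> real. \<forall>y\<in>ball x r.
        ((\<lambda>\<alpha>. c \<alpha> * (\<Prod>b\<in>Basis. ((y - x) \<bullet> b) ^ (\<alpha> b))) has_sum f y) multi_indices)"

definition real_analytic_on :: "('a::euclidean_space \<Rightarrow> real) \<Rightarrow> 'a set \<Rightarrow> bool" where
  "real_analytic_on f W \<longleftrightarrow> (\<forall>x\<in>W. real_analytic_at f x)"

text \<open>Ordinary zero of a family G of real-analytic functions near y0 vanishing at y0:
  there are f_1..f_kappa in G whose Jacobian matrix at y0 (entries = partial derivatives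
  D_i(b) along basis vectors b) has rank kappa, i.e. linearly independent rows, and the
  germ at y0 of the common zero set of G equals the germ of the zero set of f_1..f_kappa.\<close>
definition ordinary_zero :: "('a::euclidean_space \<Rightarrow> real) set \<Rightarrow> 'a \<Rightarrow> bool" where
  "ordinary_zero G y0 \<longleftrightarrow>
     (\<forall>f\<in>G. real_analytic_at f y0 \<and> f y0 = 0) \<and>
     (\<exists>fs Ds. set fs \<subseteq> G \<and> length Ds = length fs \<and>
        (\<forall>i<length fs. ((fs ! i) has_derivative (Ds ! i)) (at y0)) \<and>
        (\<forall>c :: nat \<Rightarrow> real. (\<forall>b\<in>Basis. (\<Sum>i<length fs. c i * (Ds ! i) b) = 0)
             \<longrightarrow> (\<forall>i<length fs. c i = 0)) \<and>
        (\<exists>U. open U \<and> y0 \<in> U \<and>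
           {y\<in>U. \<forall>f\<in>G. f y = 0} = {y\<in>U. \<forall>i<length fs. (fs ! i) y = 0}))"

end

theory Submission
  imports Defs
begin


definition mono_P :: "('a::euclidean_space \<Rightarrow> nat) \<Rightarrow> 'a \<Rightarrow> real" where
  "mono_P \<alpha> z = (\<Prod>b\<in>Basis. (z \<bullet> b) ^ (\<alpha> b))"

lemma ana_iff: "real_analytic_at f x \<longleftrightarrow>
     (\<exists>r>0. \<exists>c. \<forall>y\<in>ball x r. ((\<lambda>\<alpha>. c \<alpha> * mono_P \<alpha> (y - x)) has_sum f y) multi_indices)"
  unfolding real_analytic_at_def mono_P_def by simp

lemma zero_mi: "(\<lambda>_. 0) \<in> multi_indices"
  by (simp add: multi_indices_def)

lemma mono_P_zero[simp]: "mono_P (\<lambda>_. 0) z = 1"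
  by (simp add: mono_P_def)

lemma ana_const: "real_analytic_at (\<lambda>_. k) x"
  unfolding ana_iff
proof (intro exI[of _ 1] conjI exI[of _ "\<lambda>\<alpha>. if \<alpha> = (\<lambda>_. 0) then k else 0"] ballI)
  fix y :: 'a
  show "((\<lambda>\<alpha>. (if \<alpha> = (\<lambda>_. 0) then k else 0) * mono_P \<alpha> (y - x)) has_sum k) multi_indices"
    by (rule has_sum_finite_neutralI[of "{\<lambda>_. 0}"]) (auto simp: zero_mi)
qed simp

lemma ana_add:
  assumes "real_analytic_at f x" "real_analytic_at g x"
  shows "real_analytic_at (\<lambda>y. f y + g y) x"
proof -
  obtain r1 c1 where r1: "r1 > 0" "\<forall>y\<in>ball x r1. ((\<lambda>\<alpha>. c1 \<alpha> * mono_P \<alpha> (y - x)) has_sum f y) multi_indices"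
    using assms(1) unfolding ana_iff by blast
  obtain r2 c2 where r2: "r2 > 0" "\<forall>y\<in>ball x r2. ((\<lambda>\<alpha>. c2 \<alpha> * mono_P \<alpha> (y - x)) has_sum g y) multi_indices"
    using assms(2) unfolding ana_iff by blast
  show ?thesis unfolding ana_iff
  proof (intro exI[of _ "min r1 r2"] conjI exI[of _ "\<lambda>\<alpha>. c1 \<alpha> + c2 \<alpha>"] ballI)
    fix y assume "y \<in> ball x (min r1 r2)"
    then have "((\<lambda>\<alpha>. c1 \<alpha> * mono_P \<alpha> (y - x) + c2 \<alpha> * mono_P \<alpha> (y - x)) has_sum (f y + g y)) multi_indices"
      using r1 r2 by (intro has_sum_add) auto
    then show "((\<lambda>\<alpha>. (c1 \<alpha> + c2 \<alpha>) * mono_P \<alpha> (y - x)) has_sum (f y + g y)) multi_indices"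
      by (simp add: distrib_right)
  qed (use r1 r2 in auto)
qed

lemma ana_cmult:
  assumes "real_analytic_at f x"
  shows "real_analytic_at (\<lambda>y. k * f y) x"
proof -
  obtain r1 c1 where r1: "r1 > 0" "\<forall>y\<in>ball x r1. ((\<lambda>\<alpha>. c1 \<alpha> * mono_P \<alpha> (y - x)) has_sum f y) multi_indices"
    using assms(1) unfolding ana_iff by blast
  show ?thesis unfolding ana_iff
  proof (intro exI[of _ r1] conjI exI[of _ "\<lambda>\<alpha>. k * c1 \<alpha>"] ballI)
    fix y assume "y \<in> ball x r1"
    then have "((\<lambda>\<alpha>. k * (c1 \<alpha> * mono_P \<alpha> (y - x))) has_sum (k * f y)) multi_indices"
      using r1 by (intro has_sum_cmult_right) auto
    then show "((\<lambda>\<alpha>. (k * c1 \<alpha>) * mono_P \<alpha> (y - x)) has_sum (k * f y)) multi_indices"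
      by (simp add: mult.assoc)
  qed (use r1 in auto)
qed

lemma ana_sum:
  assumes "finite S" "\<And>j. j \<in> S \<Longrightarrow> real_analytic_at (f j) x"
  shows "real_analytic_at (\<lambda>y. \<Sum>j\<in>S. f j y) x"
  using assms
proof (induction S rule: finite_induct)
  case empty
  then show ?case using ana_const[of 0] by simp
next
  case (insert a F)
  then show ?case using ana_add[of "f a" x "\<lambda>y. \<Sum>j\<in>F. f j y"] by simp
qed

lemma ana_mult_coord:
  assumes "real_analytic_at F z" "e \<in> Basis"
  shows "real_analytic_at (\<lambda>y. F y * ((y - z) \<bullet> e)) z"
proof -
  obtain r c where r: "r > 0" "\<forall>y\<in>ball z r. ((\<lambda>\<alpha>. c \<alpha> * mono_P \<alpha> (y - z)) has_sum F y) multi_indices"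
    using assms(1) unfolding ana_iff by blast
  define sh where "sh \<alpha> = \<alpha>(e := \<alpha> e + 1)" for \<alpha> :: "'a \<Rightarrow> nat"
  define c' where "c' \<beta> = (if 1 \<le> \<beta> e then c (\<beta>(e := \<beta> e - 1)) else 0)" for \<beta>
  have inj: "inj_on sh multi_indices"
    by (rule inj_onI) (metis (no_types, lifting) add_right_cancel fun_upd_eqD fun_upd_idem_iff fun_upd_upd sh_def)
  have shMI: "sh ` multi_indices \<subseteq> multi_indices"
    using assms(2) by (auto simp: sh_def multi_indices_def)
  have P: "mono_P (sh \<alpha>) w = mono_P \<alpha> w * (w \<bullet> e)" for \<alpha> w
  proof -
    have "mono_P (sh \<alpha>) w = (\<Prod>b\<in>Basis. (w \<bullet> b) ^ (\<alpha> b) * (if b = e then w \<bullet> b else 1))"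
      unfolding mono_P_def sh_def by (intro prod.cong) auto
    also have "\<dots> = mono_P \<alpha> w * (w \<bullet> e)"
      unfolding prod.distrib mono_P_def using assms(2) by (simp add: prod.delta)
    finally show ?thesis .
  qed
  have c'sh: "c' (sh \<alpha>) = c \<alpha>" for \<alpha>
    by (simp add: c'_def sh_def)
  show ?thesis unfolding ana_iff
  proof (intro exI[of _ r] conjI exI[of _ c'] ballI)
    fix y assume y: "y \<in> ball z r"
    have "((\<lambda>\<alpha>. c \<alpha> * mono_P \<alpha> (y - z) * ((y - z) \<bullet> e)) has_sum (F y * ((y - z) \<bullet> e))) multi_indices"
      using r y by (intro has_sum_cmult_left) auto
    then have "(((\<lambda>\<beta>. c' \<beta> * mono_P \<beta> (y - z)) \<circ> sh) has_sum (F y * ((y - z) \<bullet> e))) multi_indices"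
      by (simp add: o_def c'sh P mult.assoc)
    then have "((\<lambda>\<beta>. c' \<beta> * mono_P \<beta> (y - z)) has_sum (F y * ((y - z) \<bullet> e))) (sh ` multi_indices)"
      using has_sum_reindex[OF inj] by blast
    moreover have "c' \<beta> = 0" if "\<beta> \<in> multi_indices - sh ` multi_indices" for \<beta>
    proof (rule ccontr)
      assume "c' \<beta> \<noteq> 0"
      then have "1 \<le> \<beta> e" by (simp add: c'_def split: if_splits)
      then have "\<beta> = sh (\<beta>(e := \<beta> e - 1))" by (auto simp: sh_def)
      moreover have "\<beta>(e := \<beta> e - 1) \<in> multi_indices"
        using that assms(2) by (auto simp: multi_indices_def)
      ultimately show False using that by blast
    qed
    ultimately show "((\<lambda>\<beta>. c' \<beta> * mono_P \<beta> (y - z)) has_sum (F y * ((y - z) \<bullet> e))) multi_indices"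
      using shMI by (subst has_sum_cong_neutral[where T="sh ` multi_indices"]) auto
  qed (use r in auto)
qed

lemma basis_fst_iff: "((u::'a::euclidean_space), (0::'b::euclidean_space)) \<in> Basis \<longleftrightarrow> u \<in> Basis"
  by (auto simp: Euclidean_Space.Basis_prod_def)

lemma ana_lift_fst:
  fixes f :: "'a::euclidean_space \<Rightarrow> real" and y0 :: "'b::euclidean_space"
  assumes "real_analytic_at f x"
  shows "real_analytic_at (\<lambda>p. f (fst p)) (x, y0)"
proof -
  obtain r c where r: "r > 0" "\<forall>y\<in>ball x r. ((\<lambda>\<alpha>. c \<alpha> * mono_P \<alpha> (y - x)) has_sum f y) multi_indices"
    using assms(1) unfolding ana_iff by blast
  define h where "h \<alpha> = (\<lambda>p::'a\<times>'b. if snd p = 0 then \<alpha> (fst p) else 0)" for \<alpha> :: "'a \<Rightarrow> nat"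
  define c' where "c' \<beta> = (if (\<forall>p::'a\<times>'b. snd p \<noteq> 0 \<longrightarrow> \<beta> p = 0) then c (\<lambda>u. \<beta> (u, 0)) else 0)" for \<beta>
  have inj: "inj_on h multi_indices"
  proof (rule inj_onI)
    fix a1 a2 assume "h a1 = h a2"
    then have "h a1 (u, 0) = h a2 (u, 0)" for u by simp
    then show "a1 = a2" by (auto simp: h_def)
  qed
  have hMI: "h ` multi_indices \<subseteq> multi_indices"
    by (auto simp: h_def multi_indices_def basis_fst_iff)
  have c'h: "c' (h \<alpha>) = c \<alpha>" for \<alpha>
    by (simp add: c'_def h_def)
  have P: "mono_P (h \<alpha>) w = mono_P \<alpha> (fst w)" for \<alpha> w
  proof -
    have inj1: "inj_on (\<lambda>u. (u::'a, 0::'b)) Basis" "inj_on (\<lambda>u. (0::'a, u::'b)) Basis"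
      by (auto intro!: inj_onI)
    have "mono_P (h \<alpha>) w = (\<Prod>b\<in>(\<lambda>u. (u, 0)) ` Basis. (w \<bullet> b) ^ (h \<alpha> b)) *
         (\<Prod>b\<in>(\<lambda>v. (0, v)) ` Basis. (w \<bullet> b) ^ (h \<alpha> b))"
      unfolding mono_P_def Euclidean_Space.Basis_prod_def
      by (rule prod.union_disjoint) (auto simp: nonzero_Basis)
    also have "\<dots> = mono_P \<alpha> (fst w)"
      using inj1 by (simp add: prod.reindex mono_P_def h_def inner_Pair_0 nonzero_Basis)
    finally show ?thesis .
  qed
  show ?thesis unfolding ana_iff
  proof (intro exI[of _ r] conjI exI[of _ c'] ballI)
    fix q assume q: "q \<in> ball (x, y0) r"
    then have "fst q \<in> ball x r"
      using dist_fst_le[of "(x,y0)" q] by auto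
    then have "((\<lambda>\<alpha>. c \<alpha> * mono_P \<alpha> (fst q - x)) has_sum f (fst q)) multi_indices"
      using r by auto
    then have "(((\<lambda>\<beta>. c' \<beta> * mono_P \<beta> (q - (x, y0))) \<circ> h) has_sum f (fst q)) multi_indices"
      by (simp add: o_def c'h P)
    then have "((\<lambda>\<beta>. c' \<beta> * mono_P \<beta> (q - (x, y0))) has_sum f (fst q)) (h ` multi_indices)"
      using has_sum_reindex[OF inj] by blast
    moreover have "c' \<beta> = 0" if "\<beta> \<in> multi_indices - h ` multi_indices" for \<beta>
    proof (rule ccontr)
      assume "c' \<beta> \<noteq> 0"
      then have z: "\<forall>p::'a\<times>'b. snd p \<noteq> 0 \<longrightarrow> \<beta> p = 0" by (simp add: c'_def split: if_splits)
      then have "\<beta> = h (\<lambda>u. \<beta> (u, 0))" by (auto simp: h_def)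
      moreover have "(\<lambda>u. \<beta> (u, 0)) \<in> multi_indices"
        using that by (auto simp: multi_indices_def basis_fst_iff)
      ultimately show False using that by blast
    qed
    ultimately show "((\<lambda>\<beta>. c' \<beta> * mono_P \<beta> (q - (x, y0))) has_sum f (fst q)) multi_indices"
      using hMI by (subst has_sum_cong_neutral[where T="h ` multi_indices"]) auto
  qed (use r in auto)
qed


lemma deg_ge2:
  fixes \<alpha> :: "'a::euclidean_space \<Rightarrow> nat"
  assumes "\<alpha> \<in> multi_indices" "\<alpha> \<noteq> (\<lambda>_. 0)" "\<And>b. b \<in> Basis \<Longrightarrow> \<alpha> \<noteq> (\<lambda>u. if u = b then 1 else 0)"
  shows "2 \<le> (\<Sum>b\<in>Basis. \<alpha> b)"
proof (rule ccontr)
  assume "\<not> 2 \<le> (\<Sum>b\<in>Basis. \<alpha> b)"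
  then have lt: "(\<Sum>b\<in>Basis. \<alpha> b) \<le> 1" by simp
  have out: "\<alpha> u = 0" if "u \<notin> Basis" for u using assms(1) that by (auto simp: multi_indices_def)
  show False
  proof (cases "\<exists>b\<in>Basis. \<alpha> b \<noteq> 0")
    case False
    then have "\<alpha> = (\<lambda>_. 0)" using out by (metis ext)
    then show False using assms(2) by simp
  next
    case True
    then obtain b where b: "b \<in> Basis" "\<alpha> b \<noteq> 0" by blast
    have "(\<Sum>u\<in>Basis. \<alpha> u) = \<alpha> b + (\<Sum>u\<in>Basis - {b}. \<alpha> u)"
      using b by (simp add: sum.remove)
    with lt have le1: "\<alpha> b + (\<Sum>u\<in>Basis - {b}. \<alpha> u) \<le> 1" by simp
    have ge1: "\<alpha> b \<ge> 1" using b by simp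
    from le1 ge1 have ab: "\<alpha> b = 1" and rest: "(\<Sum>u\<in>Basis - {b}. \<alpha> u) = 0" by linarith+
    have "\<alpha> u = 0" if "u \<in> Basis" "u \<noteq> b" for u
      using rest that by simp
    then have "\<alpha> = (\<lambda>u. if u = b then 1 else 0)" using out ab by (intro ext) auto
    then show False using assms(3) b by blast
  qed
qed

lemma ana_deriv:
  fixes f :: "'a::euclidean_space \<Rightarrow> real"
  assumes "real_analytic_at f x"
  shows "\<exists>D. (f has_derivative D) (at x)"
proof -
  obtain r c where r: "r > 0" and H: "\<forall>y\<in>ball x r. ((\<lambda>\<alpha>. c \<alpha> * mono_P \<alpha> (y - x)) has_sum f y) multi_indices"
    using assms(1) unfolding ana_iff by blast
  define n where "n = real DIM('a)"
  have n: "n \<ge> 1" unfolding n_def using DIM_positive[where 'a='a] by linarith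
  define \<rho> where "\<rho> = r / (2 * n)"
  have nr: "n * \<rho> = r / 2" using n unfolding \<rho>_def by simp
  have \<rho>0: "\<rho> > 0" using r n unfolding \<rho>_def by simp
  have "\<rho> \<le> n * \<rho>" using n \<rho>0 by simp
  then have \<rho>: "\<rho> > 0" "\<rho> < r" using \<rho>0 nr r by linarith+
  define deg where "deg \<alpha> = (\<Sum>b\<in>Basis. \<alpha> b)" for \<alpha> :: "'a \<Rightarrow> nat"
  define z0 where "z0 = (\<Sum>b\<in>(Basis::'a set). \<rho> *\<^sub>R b)"
  have z0b: "z0 \<bullet> b = \<rho>" if "b \<in> Basis" for b
  proof -
    have "z0 \<bullet> b = (\<Sum>u\<in>Basis. \<rho> * (u \<bullet> b))" by (simp add: z0_def inner_sum_left)
    also have "\<dots> = (\<Sum>u\<in>Basis. if u = b then \<rho> else 0)"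
      using that by (intro sum.cong) (auto simp: inner_Basis)
    also have "\<dots> = \<rho>" using that by simp
    finally show ?thesis .
  qed
  have "norm z0 \<le> (\<Sum>b\<in>(Basis::'a set). norm (\<rho> *\<^sub>R b))"
    unfolding z0_def by (rule norm_sum)
  also have "\<dots> = n * \<rho>" using \<rho> by (simp add: n_def)
  also have "\<dots> < r" using r nr by linarith
  finally have "x + z0 \<in> ball x r" by (simp add: dist_norm)
  moreover have Pz0: "mono_P \<alpha> z0 = \<rho> ^ deg \<alpha>" for \<alpha>
    unfolding mono_P_def deg_def power_sum by (intro prod.cong) (auto simp: z0b)
  ultimately have "((\<lambda>\<alpha>. c \<alpha> * \<rho> ^ deg \<alpha>) has_sum f (x + z0)) multi_indices"
    using H by fastforce
  then have "(\<lambda>\<alpha>. c \<alpha> * \<rho> ^ deg \<alpha>) summable_on multi_indices"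
    by (rule has_sum_imp_summable)
  then have "(\<lambda>\<alpha>. norm (c \<alpha> * \<rho> ^ deg \<alpha>)) summable_on multi_indices"
    by (rule summable_on_iff_abs_summable_on_real[THEN iffD1])
  moreover have "norm (c \<alpha> * \<rho> ^ deg \<alpha>) = \<bar>c \<alpha>\<bar> * \<rho> ^ deg \<alpha>" for \<alpha>
    using \<rho>0 by (simp add: abs_mult)
  ultimately have abs1: "(\<lambda>\<alpha>. \<bar>c \<alpha>\<bar> * \<rho> ^ deg \<alpha>) summable_on multi_indices"
    by simp
  define zero where "zero = (\<lambda>_::'a. 0::nat)"
  define ee where "ee b = (\<lambda>u. if u = b then 1 else (0::nat))" for b :: 'a
  define F where "F = insert zero (ee ` Basis)"
  have finF: "finite F" by (simp add: F_def)
  have FMI: "F \<subseteq> multi_indices"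
    by (auto simp: F_def zero_def ee_def multi_indices_def)
  have abs2: "(\<lambda>\<alpha>. \<bar>c \<alpha>\<bar> * \<rho> ^ deg \<alpha>) summable_on (multi_indices - F)"
    by (rule summable_on_subset_banach[OF abs1]) auto
  define K where "K = infsum (\<lambda>\<alpha>. \<bar>c \<alpha>\<bar> * \<rho> ^ deg \<alpha>) (multi_indices - F)"
  define D where "D h = (\<Sum>b\<in>Basis. c (ee b) * (h \<bullet> b))" for h :: 'a
  have deg2: "2 \<le> deg \<alpha>" if "\<alpha> \<in> multi_indices - F" for \<alpha>
    unfolding deg_def using that by (intro deg_ge2) (auto simp: F_def zero_def ee_def)
  have Pee: "mono_P (ee b) h = h \<bullet> b" if "b \<in> Basis" for b h
  proof -
    have "mono_P (ee b) h = (\<Prod>u\<in>Basis. if u = b then h \<bullet> u else 1)"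
      unfolding mono_P_def ee_def by (intro prod.cong) auto
    then show ?thesis using that by (simp add: prod.delta)
  qed
  have injee: "inj_on ee Basis"
  proof (rule inj_onI)
    fix a b assume "ee a = ee b"
    then have "ee a a = ee b a" by simp
    then show "a = b" by (simp add: ee_def split: if_splits)
  qed
  have zee: "zero \<notin> ee ` Basis"
  proof
    assume "zero \<in> ee ` Basis" then obtain b where "zero = ee b" by blast
    then have "zero b = ee b b" by simp
    then show False by (simp add: zero_def ee_def)
  qed
  have sumF: "(\<Sum>\<alpha>\<in>F. c \<alpha> * mono_P \<alpha> h) = c zero + D h" for h
  proof -
    have "(\<Sum>\<alpha>\<in>F. c \<alpha> * mono_P \<alpha> h) = c zero * mono_P zero h + (\<Sum>\<alpha>\<in>ee ` Basis. c \<alpha> * mono_P \<alpha> h)"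
      unfolding F_def using zee by (simp add: sum.insert)
    also have "(\<Sum>\<alpha>\<in>ee ` Basis. c \<alpha> * mono_P \<alpha> h) = D h"
      unfolding D_def using injee by (simp add: sum.reindex Pee)
    finally show ?thesis by (simp add: zero_def)
  qed
  have bound: "\<bar>f (x + h) - c zero - D h\<bar> \<le> K / \<rho>^2 * (norm h)^2" if h: "norm h < \<rho>" for h
  proof -
    have "x + h \<in> ball x r" using h \<rho> by (simp add: dist_norm)
    then have S: "((\<lambda>\<alpha>. c \<alpha> * mono_P \<alpha> h) has_sum f (x + h)) multi_indices"
      using H by fastforce
    have "((\<lambda>\<alpha>. c \<alpha> * mono_P \<alpha> h) has_sum (f (x + h) - (c zero + D h))) (multi_indices - F)"
      using has_sum_Diff[OF S has_sum_finite[OF finF] FMI] by (simp add: sumF)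
    moreover have "((\<lambda>\<alpha>. \<bar>c \<alpha>\<bar> * \<rho> ^ deg \<alpha> * ((norm h / \<rho>)^2)) has_sum (K * (norm h / \<rho>)^2)) (multi_indices - F)"
      unfolding K_def by (intro has_sum_cmult_left) (use abs2 in simp)
    moreover have "norm (c \<alpha> * mono_P \<alpha> h) \<le> \<bar>c \<alpha>\<bar> * \<rho> ^ deg \<alpha> * ((norm h / \<rho>)^2)"
      if a: "\<alpha> \<in> multi_indices - F" for \<alpha>
    proof -
      have "\<bar>mono_P \<alpha> h\<bar> = (\<Prod>b\<in>Basis. \<bar>h \<bullet> b\<bar> ^ \<alpha> b)"
        unfolding mono_P_def by (simp add: abs_prod power_abs)
      also have "\<dots> \<le> (\<Prod>b\<in>Basis. (norm h) ^ \<alpha> b)"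
        by (intro prod_mono conjI power_mono Basis_le_norm) auto
      also have "\<dots> = norm h ^ deg \<alpha>" by (simp add: deg_def power_sum)
      also have "\<dots> \<le> \<rho> ^ deg \<alpha> * ((norm h / \<rho>)^2)"
      proof -
        obtain k where k: "deg \<alpha> = k + 2" using deg2[OF a] by (metis add.commute le_Suc_ex)
        have "norm h ^ k \<le> \<rho> ^ k" using h by (intro power_mono) auto
        then have "norm h ^ k * norm h ^ 2 \<le> \<rho> ^ k * norm h ^ 2"
          by (intro mult_right_mono) auto
        moreover have "\<rho> ^ (k + 2) * (norm h / \<rho>)^2 = \<rho> ^ k * norm h ^ 2"
        proof -
          have "\<rho> ^ (k + 2) = \<rho> ^ k * \<rho> ^ 2" by (rule power_add)
          then show ?thesis using \<rho>0 by (simp add: power_divide power2_eq_square)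
        qed
        moreover have "norm h ^ (k + 2) = norm h ^ k * norm h ^ 2" by (rule power_add)
        ultimately show ?thesis unfolding k by linarith
      qed
      finally have "\<bar>mono_P \<alpha> h\<bar> \<le> \<rho> ^ deg \<alpha> * ((norm h / \<rho>)^2)" .
      then have "\<bar>c \<alpha>\<bar> * \<bar>mono_P \<alpha> h\<bar> \<le> \<bar>c \<alpha>\<bar> * (\<rho> ^ deg \<alpha> * ((norm h / \<rho>)^2))"
        by (rule mult_left_mono) simp
      then show ?thesis by (simp add: abs_mult mult.assoc)
    qed
    ultimately have "norm (f (x + h) - (c zero + D h)) \<le> K * (norm h / \<rho>)^2"
      by (rule norm_infsum_le)
    then show ?thesis by (simp add: power_divide)
  qed
  have D0: "D 0 = 0" by (simp add: D_def)
  have fx: "f x = c zero" using bound[of 0] \<rho> D0 by simp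
  have bl: "bounded_linear D"
    unfolding D_def by (intro bounded_linear_intros)
  show ?thesis
  proof (intro exI[of _ D], subst has_derivative_iff_norm, intro conjI)
    show "bounded_linear D" by (rule bl)
    show "((\<lambda>y. norm (f y - f x - D (y - x)) / norm (y - x)) \<longlongrightarrow> 0) (at x)"
    proof (rule Lim_null_comparison)
      show "\<forall>\<^sub>F y in at x. norm (norm (f y - f x - D (y - x)) / norm (y - x)) \<le> K / \<rho>^2 * norm (y - x)"
        unfolding eventually_at
      proof (intro exI[of _ \<rho>] conjI ballI impI)
        fix y assume y: "y \<noteq> x \<and> dist y x < \<rho>"
        then have ny: "norm (y - x) > 0" "norm (y - x) < \<rho>" by (auto simp: dist_norm)
        have "\<bar>f (x + (y - x)) - c zero - D (y - x)\<bar> \<le> K / \<rho>^2 * (norm (y - x))^2"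
          using bound ny by blast
        then have "\<bar>f y - f x - D (y - x)\<bar> / norm (y - x) \<le> K / \<rho>^2 * (norm (y - x))^2 / norm (y - x)"
          using ny by (intro divide_right_mono) (auto simp: fx)
        then show "norm (norm (f y - f x - D (y - x)) / norm (y - x)) \<le> K / \<rho>^2 * norm (y - x)"
          using ny by (simp add: power2_eq_square)
      qed (rule \<rho>0)
      have "((\<lambda>y. y - x) \<longlongrightarrow> 0) (at x)"
        using tendsto_diff[OF tendsto_ident_at tendsto_const, of x x] by simp
      then have "((\<lambda>y. norm (y - x)) \<longlongrightarrow> 0) (at x)" by (rule tendsto_norm_zero)
      from tendsto_mult[OF tendsto_const this, of "K / \<rho>^2"]
      show "((\<lambda>y. K / \<rho>^2 * norm (y - x)) \<longlongrightarrow> 0) (at x)" by simp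
    qed
  qed
qed



lemma nullity:
  fixes vs :: "'a::euclidean_space set"
  shows "dim {x. \<forall>w\<in>vs. w \<bullet> x = 0} + dim (span vs) = DIM('a)"
proof -
  have "dim {y \<in> UNIV. \<forall>x \<in> span vs. orthogonal x y} + dim (span vs) = dim (UNIV :: 'a set)"
    by (rule dim_subspace_orthogonal_to_vectors) auto
  moreover have "{y \<in> UNIV. \<forall>x \<in> span vs. orthogonal x y} = {x. \<forall>w\<in>vs. w \<bullet> x = 0}"
  proof (intro set_eqI iffI)
    fix y assume "y \<in> {y \<in> UNIV. \<forall>x \<in> span vs. orthogonal x y}"
    then show "y \<in> {x. \<forall>w\<in>vs. w \<bullet> x = 0}" by (auto simp: orthogonal_def dest: span_base)
  next
    fix y assume y: "y \<in> {x. \<forall>w\<in>vs. w \<bullet> x = 0}"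
    have "orthogonal y a" if "a \<in> span vs" for a
      by (rule orthogonal_to_span[OF that]) (use y in \<open>auto simp: orthogonal_def inner_commute\<close>)
    then show "y \<in> {y \<in> UNIV. \<forall>x \<in> span vs. orthogonal x y}"
      by (auto simp: orthogonal_def inner_commute)
  qed
  ultimately show ?thesis by simp
qed

lemma subspace_null: "subspace {x. \<forall>w\<in>vs. w \<bullet> x = 0}"
  by (auto simp: subspace_def inner_add_right)

lemma aff_dim_sol:
  fixes w :: "nat \<Rightarrow> 'a::euclidean_space"
  assumes "t1 \<in> S" "S = {t. \<forall>i\<in>I. w i \<bullet> t = c i}"
  shows "aff_dim S = int (dim {x. \<forall>u\<in>w ` I. u \<bullet> x = 0})"
proof -
  define N where "N = {x. \<forall>u\<in>w ` I. u \<bullet> x = 0}"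
  have "S = (+) t1 ` N"
  proof (intro set_eqI iffI)
    fix x assume "x \<in> S"
    then have "x - t1 \<in> N" using assms by (auto simp: N_def inner_diff_right)
    then show "x \<in> (+) t1 ` N" by (intro image_eqI[of _ _ "x - t1"]) auto
  next
    fix x assume "x \<in> (+) t1 ` N"
    then show "x \<in> S" using assms by (auto simp: N_def inner_add_right)
  qed
  then have "aff_dim S = aff_dim N" by (simp add: aff_dim_translation_eq)
  also have "\<dots> = int (dim N)" by (rule aff_dim_subspace) (unfold N_def, rule subspace_null)
  finally show ?thesis by (simp add: N_def)
qed

lemma ana_L:
  fixes V :: "'n2::finite \<Rightarrow> real^'n1 \<Rightarrow> real" and b :: "real^'n1 \<Rightarrow> real"
  assumes "\<And>j. real_analytic_at (V j) s0" "real_analytic_at b s0"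
  shows "real_analytic_at (\<lambda>(s, t). (\<Sum>j\<in>UNIV. V j s * t $ j) - b s) (s0, t0)"
proof -
  have eq: "(\<lambda>(s, t). (\<Sum>j\<in>UNIV. V j s * t $ j) - b s) =
    (\<lambda>p. (\<Sum>j\<in>UNIV. t0 $ j * V j (fst p) + V j (fst p) * ((p - (s0, t0)) \<bullet> (0, axis j 1))) + (-1) * b (fst p))"
  proof (intro ext)
    fix p :: "(real^'n1) \<times> (real^'n2)"
    obtain s t where p: "p = (s, t)" by (cases p)
    have e: "(p - (s0, t0)) \<bullet> (0, axis j 1) = t $ j - t0 $ j" for j
      by (simp add: p inner_axis)
    have "(\<Sum>j\<in>UNIV. t0 $ j * V j (fst p) + V j (fst p) * ((p - (s0, t0)) \<bullet> (0, axis j 1))) = (\<Sum>j\<in>UNIV. V j s * t $ j)"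
    proof (rule sum.cong[OF refl])
      fix j show "t0 $ j * V j (fst p) + V j (fst p) * ((p - (s0, t0)) \<bullet> (0, axis j 1)) = V j s * t $ j"
        unfolding e by (simp add: p algebra_simps)
    qed
    then show "(case p of (s, t) \<Rightarrow> (\<Sum>j\<in>UNIV. V j s * t $ j) - b s) =
      (\<Sum>j\<in>UNIV. t0 $ j * V j (fst p) + V j (fst p) * ((p - (s0, t0)) \<bullet> (0, axis j 1))) + (-1) * b (fst p)"
      by (simp add: p)
  qed
  have bas: "(0::real^'n1, axis j (1::real)) \<in> Basis" for j :: 'n2
    by (simp add: Euclidean_Space.Basis_prod_def)
  show ?thesis unfolding eq
    by (intro ana_add ana_sum ana_cmult ana_mult_coord ana_lift_fst assms bas) simp
qed

lemma deriv_axis: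
  fixes V :: "'n2::finite \<Rightarrow> real^'n1 \<Rightarrow> real" and b :: "real^'n1 \<Rightarrow> real"
  assumes "(f has_derivative D) (at (s0, t0))"
    and f: "f = (\<lambda>(s, t). (\<Sum>j\<in>UNIV. V j s * t $ j) - b s)"
    and z: "f (s0, t0) = 0"
  shows "D (0, axis j 1) = V j s0"
proof -
  define \<phi> where "\<phi> h = (s0, t0) + h *\<^sub>R (0::real^'n1, axis j (1::real))" for h :: real
  have d\<phi>: "(\<phi> has_derivative (\<lambda>h. h *\<^sub>R (0, axis j 1))) (at 0)"
    unfolding \<phi>_def by (intro derivative_eq_intros) auto
  have "((\<lambda>h. f (\<phi> h)) has_derivative (\<lambda>h. D (h *\<^sub>R (0, axis j 1)))) (at 0)"
    using has_derivative_compose[OF d\<phi>] assms(1) by (simp add: \<phi>_def)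
  moreover have "(\<lambda>h. f (\<phi> h)) = (\<lambda>h. h * V j s0)"
  proof
    fix h
    have "f (\<phi> h) = (\<Sum>k\<in>UNIV. V k s0 * (t0 + h *\<^sub>R axis j 1) $ k) - b s0"
      unfolding f \<phi>_def by simp
    also have "(\<Sum>k\<in>UNIV. V k s0 * (t0 + h *\<^sub>R axis j 1) $ k) =
        (\<Sum>k\<in>UNIV. V k s0 * t0 $ k + (if k = j then h * V j s0 else 0))"
      by (intro sum.cong) (auto simp: axis_def algebra_simps)
    also have "\<dots> = (\<Sum>k\<in>UNIV. V k s0 * t0 $ k) + h * V j s0"
      by (simp add: sum.distrib)
    finally have "f (\<phi> h) = f (s0, t0) + h * V j s0" by (simp add: f)
    then show "f (\<phi> h) = h * V j s0" using z by simp
  qed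
  ultimately have "((\<lambda>h. h * V j s0) has_derivative (\<lambda>h. D (h *\<^sub>R (0, axis j 1)))) (at 0)" by simp
  moreover have "((\<lambda>h. h * V j s0) has_derivative (\<lambda>h. h * V j s0)) (at 0)"
    by (intro bounded_linear_imp_has_derivative bounded_linear_intros)
  ultimately have "(\<lambda>h. D (h *\<^sub>R (0, axis j 1))) = (\<lambda>h. h * V j s0)"
    by (rule has_derivative_unique)
  from fun_cong[OF this, of 1] show ?thesis by simp
qed

theorem lemma6p2:
  fixes V :: "nat \<Rightarrow> 'n2::finite \<Rightarrow> real^'n1 \<Rightarrow> real"
    and b :: "nat \<Rightarrow> real^'n1 \<Rightarrow> real"
    and M :: nat and W :: "(real^'n1) set" and s0 :: "real^'n1" and t0 :: "real^'n2"
    and A :: "((real^'n1) \<times> (real^'n2)) set"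
    and L :: "nat \<Rightarrow> (real^'n1) \<times> (real^'n2) \<Rightarrow> real"
    and \<kappa> :: nat
  assumes W: "open W" "s0 \<in> W"
    and V_an: "\<And>i j. i < M \<Longrightarrow> real_analytic_on (V i j) W"
    and b_an: "\<And>i. i < M \<Longrightarrow> real_analytic_on (b i) W"
    and L_def: "\<And>i. L i = (\<lambda>(s, t). (\<Sum>j\<in>UNIV. V i j s * t $ j) - b i s)"
    and vanish: "\<And>i. i < M \<Longrightarrow> L i (s0, t0) = 0"
    and A_def: "A = {(s, t). s \<in> W \<and> (\<forall>i<M. L i (s, t) = 0)}"
    and dim: "\<And>s1. s1 \<in> W \<Longrightarrow> aff_dim {t. (s1, t) \<in> A} = int \<kappa>"
  shows "ordinary_zero {L i | i. i < M} (s0, t0)"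
proof -
  define v where "v i s = (\<chi> j. V i j s)" for i s
  have Lv: "L i (s, t) = v i s \<bullet> t - b i s" for i s t
    by (simp add: L_def v_def inner_vec_def)
  define Sol where "Sol s = {t. \<forall>i\<in>{..<M}. v i s \<bullet> t = b i s}" for s
  have SolA: "{t. (s, t) \<in> A} = Sol s" if "s \<in> W" for s
    using that by (auto simp: A_def Sol_def Lv)
  have Sol_ne: "\<exists>t1. t1 \<in> Sol s" if "s \<in> W" for s
  proof (rule ccontr)
    assume "\<not> ?thesis"
    then have "Sol s = {}" by blast
    then show False using dim[OF that] SolA[OF that] by simp
  qed
  have rank: "dim ((\<lambda>i. v i s) ` {..<M}) + \<kappa> = CARD('n2)" if s: "s \<in> W" for s
  proof -
    obtain t1 where t1: "t1 \<in> Sol s" using Sol_ne[OF s] by blast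
    have "aff_dim (Sol s) = int (dim {x. \<forall>u\<in>(\<lambda>i. v i s) ` {..<M}. u \<bullet> x = 0})"
      by (rule aff_dim_sol[OF t1]) (simp add: Sol_def)
    then have "dim {x. \<forall>u\<in>(\<lambda>i. v i s) ` {..<M}. u \<bullet> x = 0} = \<kappa>"
      using dim[OF s] SolA[OF s] by simp
    then show ?thesis using nullity[of "(\<lambda>i. v i s) ` {..<M}"] by simp
  qed
  obtain B where B: "B \<subseteq> (\<lambda>i. v i s0) ` {..<M}" "independent B" "(\<lambda>i. v i s0) ` {..<M} \<subseteq> span B"
    using maximal_independent_subset by blast
  have finB: "finite B" using B(2) independent_bound by blast
  define sel where "sel w = (SOME i. i < M \<and> v i s0 = w)" for w
  have sel: "sel w < M \<and> v (sel w) s0 = w" if "w \<in> B" for w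
  proof -
    have "\<exists>i. i < M \<and> v i s0 = w" using that B(1) by auto
    then show ?thesis unfolding sel_def by (rule someI_ex)
  qed
  define I where "I = sel ` B"
  have IM: "I \<subseteq> {..<M}" using sel by (auto simp: I_def)
  have finI: "finite I" using finB by (simp add: I_def)
  have imI: "(\<lambda>i. v i s0) ` I = B"
    using sel by (force simp: I_def image_iff)
  have injI: "inj_on (\<lambda>i. v i s0) I"
    by (rule inj_onI) (use sel in \<open>auto simp: I_def\<close>)
  have spanB: "span B = span ((\<lambda>i. v i s0) ` {..<M})"
    using B(1,3) by (simp add: span_eq span_superset subset_trans[OF B(1) span_superset])
  define r where "r = dim ((\<lambda>i. v i s0) ` {..<M})"
  have rB: "dim (span B) = r" unfolding r_def by (metis spanB dim_span)
  have rk: "r + \<kappa> = CARD('n2)" using rank[OF W(2)] by (simp add: r_def)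
  define C where "C = span B"
  define f0 where "f0 x = (\<Sum>i\<in>I. (v i s0 \<bullet> x) *\<^sub>R v i s0)" for x
  have blf0: "bounded_linear f0" unfolding f0_def by (intro bounded_linear_intros)
  have inj0: "\<forall>x\<in>C. f0 x = 0 \<longrightarrow> x = 0"
  proof (intro ballI impI)
    fix x assume x: "x \<in> C" "f0 x = 0"
    have "x \<bullet> f0 x = (\<Sum>i\<in>I. (v i s0 \<bullet> x)^2)"
      unfolding f0_def by (simp add: inner_sum_right inner_commute power2_eq_square)
    then have "(\<Sum>i\<in>I. (v i s0 \<bullet> x)^2) = 0" using x by simp
    then have z: "\<forall>i\<in>I. v i s0 \<bullet> x = 0" using finI by (simp add: sum_nonneg_eq_0_iff)
    have "orthogonal x x"
      by (rule orthogonal_to_span[OF x(1)[unfolded C_def]])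
         (use z imI in \<open>auto simp: orthogonal_def inner_commute\<close>)
    then show "x = 0" by (simp add: orthogonal_def)
  qed
  obtain e where e: "e > 0" "\<forall>x\<in>C. norm (f0 x) \<ge> e * norm x"
    using injective_imp_isometric[OF closed_subspace subspace_span[of B] blf0] inj0
    unfolding C_def by blast
  have Van: "real_analytic_at (V i j) s0" if "i < M" for i j
    using V_an[OF that] W(2) by (simp add: real_analytic_on_def)
  have ban: "real_analytic_at (b i) s0" if "i < M" for i
    using b_an[OF that] W(2) by (simp add: real_analytic_on_def)
  have Vcont: "((\<lambda>s. V i j s) \<longlongrightarrow> V i j s0) (at s0)" if iM: "i < M" for i j
  proof -
    obtain D where "(V i j has_derivative D) (at s0)" using ana_deriv[OF Van[OF iM]] by blast
    then have "isCont (V i j) s0" by (rule has_derivative_continuous)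
    then show ?thesis by (simp add: isCont_def)
  qed
  have vcont: "((\<lambda>s. v i s) \<longlongrightarrow> v i s0) (at s0)" if "i < M" for i
    unfolding v_def by (intro tendsto_vec_lambda Vcont that)
  define g where "g s = (\<Sum>i\<in>I. norm (v i s - v i s0) * norm (v i s0))" for s
  have "(g \<longlongrightarrow> g s0) (at s0)"
    unfolding g_def using IM by (intro tendsto_intros vcont) auto
  moreover have "g s0 = 0" by (simp add: g_def)
  ultimately have "\<forall>\<^sub>F s in at s0. dist (g s) 0 < e" using e(1) by (metis tendstoD)
  then obtain d where d: "d > 0" "\<And>s. s \<noteq> s0 \<Longrightarrow> dist s s0 < d \<Longrightarrow> dist (g s) 0 < e"
    unfolding eventually_at by blast
  have gs: "g s < e" if "dist s s0 < d" for s
  proof (cases "s = s0")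
    case False
    then have "\<bar>g s\<bar> < e" using d(2)[OF False that] by simp
    then show ?thesis by simp
  qed (use \<open>g s0 = 0\<close> e(1) in simp)
  obtain \<epsilon> where \<epsilon>: "\<epsilon> > 0" "ball s0 \<epsilon> \<subseteq> W" using W openE by blast
  define \<mu> where "\<mu> = min d \<epsilon>"
  have \<mu>: "\<mu> > 0" using d \<epsilon> by (simp add: \<mu>_def)
  have \<mu>W: "s \<in> W" and \<mu>g: "g s < e" if "s \<in> ball s0 \<mu>" for s
    using that \<epsilon> gs by (auto simp: \<mu>_def dist_commute)
  have spanI: "span ((\<lambda>i. v i s) ` I) = span ((\<lambda>i. v i s) ` {..<M})" if s: "s \<in> ball s0 \<mu>" for s
  proof -
    define NI where "NI = {x. \<forall>w\<in>(\<lambda>i. v i s) ` I. w \<bullet> x = 0}"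
    have subNI: "subspace NI" unfolding NI_def by (rule subspace_null)
    have int0: "NI \<inter> C \<subseteq> {0}"
    proof
      fix x assume x: "x \<in> NI \<inter> C"
      show "x \<in> {0}"
      proof (rule ccontr)
        assume "x \<notin> {0}"
        then have nx: "norm x > 0" by simp
        have "f0 x = (\<Sum>i\<in>I. ((v i s0 - v i s) \<bullet> x) *\<^sub>R v i s0)"
          unfolding f0_def using x by (intro sum.cong) (auto simp: NI_def inner_diff_left)
        then have "norm (f0 x) \<le> (\<Sum>i\<in>I. norm (((v i s0 - v i s) \<bullet> x) *\<^sub>R v i s0))"
          by (simp only: norm_sum)
        also have "\<dots> \<le> (\<Sum>i\<in>I. norm x * (norm (v i s - v i s0) * norm (v i s0)))"
        proof (intro sum_mono)
          fix i assume "i \<in> I"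
          have "\<bar>(v i s0 - v i s) \<bullet> x\<bar> \<le> norm (v i s0 - v i s) * norm x"
            by (rule Cauchy_Schwarz_ineq2)
          then have "\<bar>(v i s0 - v i s) \<bullet> x\<bar> * norm (v i s0) \<le> norm (v i s0 - v i s) * norm x * norm (v i s0)"
            by (rule mult_right_mono) simp
          then show "norm (((v i s0 - v i s) \<bullet> x) *\<^sub>R v i s0) \<le> norm x * (norm (v i s - v i s0) * norm (v i s0))"
            by (simp add: norm_minus_commute mult_ac)
        qed
        also have "\<dots> = norm x * g s" by (simp add: g_def sum_distrib_left)
        also have "\<dots> < norm x * e" using nx \<mu>g[OF s] by simp
        finally have "norm (f0 x) < e * norm x" by (simp add: mult.commute)
        moreover have "norm (f0 x) \<ge> e * norm x" using e(2) x by blast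
        ultimately show False by simp
      qed
    qed
    have d0: "dim (NI \<inter> C) = 0" using int0 by simp
    have "dim {x + y |x y. x \<in> NI \<and> y \<in> C} + dim (NI \<inter> C) = dim NI + dim C"
      by (rule dim_sums_Int[OF subNI]) (simp add: C_def subspace_span)
    moreover have "dim {x + y |x y. x \<in> NI \<and> y \<in> C} \<le> CARD('n2)"
      by (rule dim_subset_UNIV_cart)
    moreover have "dim C = r" using rB by (simp add: C_def)
    ultimately have dNI: "dim NI \<le> \<kappa>" using d0 rk by linarith
    have "dim NI + dim (span ((\<lambda>i. v i s) ` I)) = CARD('n2)"
      using nullity[of "(\<lambda>i. v i s) ` I"] by (simp add: NI_def)
    then have geI: "dim ((\<lambda>i. v i s) ` I) \<ge> r" using dNI rk by simp
    have eqM: "dim ((\<lambda>i. v i s) ` {..<M}) = r" using rank[OF \<mu>W[OF s]] rk by simp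
    show ?thesis
      by (rule dim_eq_span) (use IM geI eqM in auto)
  qed
  have key: "\<forall>i<M. L i (s, t) = 0" if s: "s \<in> ball s0 \<mu>" and t: "\<forall>i\<in>I. L i (s, t) = 0" for s t
  proof (intro allI impI)
    fix k assume k: "k < M"
    obtain t1 where t1: "t1 \<in> Sol s" using Sol_ne[OF \<mu>W[OF s]] by blast
    have "v k s \<in> span ((\<lambda>i. v i s) ` I)"
      using spanI[OF s] k by (auto intro: span_base)
    moreover have "orthogonal (t - t1) y" if "y \<in> (\<lambda>i. v i s) ` I" for y
      using that t t1 IM by (auto simp: orthogonal_def Sol_def Lv inner_diff_left inner_diff_right inner_commute)
    ultimately have "orthogonal (t - t1) (v k s)" by (rule orthogonal_to_span)
    then have "v k s \<bullet> t = v k s \<bullet> t1" by (simp add: orthogonal_def inner_diff_left inner_diff_right inner_commute)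
    then show "L k (s, t) = 0" using t1 k by (simp add: Lv Sol_def)
  qed
  define "is" where "is = sorted_list_of_set I"
  have set_is: "set is = I" and dist_is: "distinct is" using finI by (auto simp: is_def)
  define DD where "DD i = (SOME D. (L i has_derivative D) (at (s0, t0)))" for i
  have Lan: "real_analytic_at (L i) (s0, t0)" if "i < M" for i
    unfolding L_def by (rule ana_L) (use Van ban that in auto)
  have DD: "(L i has_derivative DD i) (at (s0, t0))" if iM: "i < M" for i
  proof -
    have "\<exists>D. (L i has_derivative D) (at (s0, t0))" by (rule ana_deriv[OF Lan[OF iM]])
    then show ?thesis unfolding DD_def by (rule someI_ex)
  qed
  have DDax: "DD i (0, axis j 1) = V i j s0" if iM: "i < M" for i j
    by (rule deriv_axis[OF DD[OF iM] L_def vanish[OF iM]])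
  define n where "n = length is"
  have isI: "is ! k \<in> I" if "k < n" for k using that set_is by (auto simp: n_def)
  have isM: "is ! k < M" if "k < n" for k using isI[OF that] IM by auto
  show ?thesis
    unfolding ordinary_zero_def
  proof (intro conjI)
    show "\<forall>f\<in>{L i |i. i < M}. real_analytic_at f (s0, t0) \<and> f (s0, t0) = 0"
      using Lan vanish by blast
    show "\<exists>fs Ds. set fs \<subseteq> {L i |i. i < M} \<and> length Ds = length fs \<and>
        (\<forall>i<length fs. (fs ! i has_derivative Ds ! i) (at (s0, t0))) \<and>
        (\<forall>c. (\<forall>b\<in>Basis. (\<Sum>i<length fs. c i * (Ds ! i) b) = 0) \<longrightarrow> (\<forall>i<length fs. c i = 0)) \<and>
        (\<exists>U. open U \<and> (s0, t0) \<in> U \<and> {y \<in> U. \<forall>f\<in>{L i |i. i < M}. f y = 0} = {y \<in> U. \<forall>i<length fs. (fs ! i) y = 0})"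
    proof (rule exI[of _ "map L is"], rule exI[of _ "map DD is"], intro conjI)
      show "set (map L is) \<subseteq> {L i |i. i < M}" using set_is IM by auto
      show "length (map DD is) = length (map L is)" by simp
      show "\<forall>i<length (map L is). (map L is ! i has_derivative map DD is ! i) (at (s0, t0))"
        using DD isM by (simp add: n_def)
      show "\<forall>c. (\<forall>b\<in>Basis. (\<Sum>i<length (map L is). c i * (map DD is ! i) b) = 0) \<longrightarrow> (\<forall>i<length (map L is). c i = 0)"
      proof (rule allI, rule impI)
        fix c assume H: "\<forall>b\<in>Basis. (\<Sum>i<length (map L is). c i * (map DD is ! i) b) = 0"
        define w where "w k = v (is ! k) s0" for k
        have sum0: "(\<Sum>k<n. c k *\<^sub>R w k) = 0"
        proof (subst vec_eq_iff, intro allI)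
          fix j :: 'n2
          have bas: "(0::real^'n1, axis j (1::real)) \<in> Basis"
            by (simp add: Euclidean_Space.Basis_prod_def)
          have "(\<Sum>k<n. c k *\<^sub>R w k) $ j = (\<Sum>k<n. c k * DD (is ! k) (0, axis j 1))"
            by (auto simp: w_def v_def DDax isM intro!: sum.cong)
          also have "\<dots> = 0" using H bas by (simp add: n_def)
          finally show "(\<Sum>k<n. c k *\<^sub>R w k) $ j = 0 $ j" by simp
        qed
        have injw: "inj_on w {..<n}"
        proof (rule inj_onI)
          fix k1 k2 assume k: "k1 \<in> {..<n}" "k2 \<in> {..<n}" "w k1 = w k2"
          then have "is ! k1 = is ! k2" using injI isI by (auto simp: w_def inj_on_def)
          then show "k1 = k2" using k dist_is by (simp add: n_def nth_eq_iff_index_eq)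
        qed
        have imw: "w ` {..<n} = B"
        proof -
          have "w ` {..<n} = (\<lambda>i. v i s0) ` set is"
            unfolding w_def n_def by (auto simp: in_set_conv_nth image_iff; metis nth_mem)
          then show ?thesis using set_is imI by simp
        qed
        define ci where "ci u = c (the_inv_into {..<n} w u)" for u
        have "(\<Sum>u\<in>B. ci u *\<^sub>R u) = (\<Sum>k<n. c k *\<^sub>R w k)"
          unfolding imw[symmetric] using injw
          by (simp add: sum.reindex ci_def the_inv_into_f_f)
        then have "(\<Sum>u\<in>B. ci u *\<^sub>R u) = 0" using sum0 by simp
        then have ciz: "\<forall>u\<in>B. ci u = 0" using B(2) independent_explicit by blast
        show "\<forall>i<length (map L is). c i = 0"
        proof (intro allI impI)
          fix k assume "k < length (map L is)"
          then have k: "k < n" by (simp add: n_def)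
          then have "w k \<in> B" using imw by auto
          then have "ci (w k) = 0" using ciz by blast
          then show "c k = 0" using k injw by (simp add: ci_def the_inv_into_f_f)
        qed
      qed
      show "\<exists>U. open U \<and> (s0, t0) \<in> U \<and> {y \<in> U. \<forall>f\<in>{L i |i. i < M}. f y = 0} =
          {y \<in> U. \<forall>i<length (map L is). (map L is ! i) y = 0}"
      proof (intro exI[of _ "ball s0 \<mu> \<times> UNIV"] conjI)
        show "open (ball s0 \<mu> \<times> (UNIV :: (real^'n2) set))" by (simp add: open_Times)
        show "(s0, t0) \<in> ball s0 \<mu> \<times> UNIV" using \<mu> by simp
        have eqI: "(\<forall>k<length (map L is). (map L is ! k) y = 0) \<longleftrightarrow> (\<forall>i\<in>I. L i y = 0)" for y
          using set_is by (auto simp: in_set_conv_nth; metis nth_mem)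
        have eqG: "(\<forall>f\<in>{L i |i. i < M}. f y = 0) \<longleftrightarrow> (\<forall>i<M. L i y = 0)" for y
          by blast
        show "{y \<in> ball s0 \<mu> \<times> UNIV. \<forall>f\<in>{L i |i. i < M}. f y = 0} =
          {y \<in> ball s0 \<mu> \<times> UNIV. \<forall>i<length (map L is). (map L is ! i) y = 0}"
          unfolding eqI eqG using key IM by fastforce
      qed
    qed
  qed
qed


end
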